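(* Let $G$ be a connected graph with $n\geq 2$ vertices and $m$ edges, and let $S(G)$ be its subdivision. Then $$R^*(S(G))=8R^*(G)+2m(2m-2n+1).$$
   Context: All graphs are finite, undirected, without loops or multiple edges. For a connected graph $H$ and vertices $i,j$, the resistance distance $\Omega_{ij}$ is the effective resistance between $i$ and $j$ in the electrical network obtained from $H$ by replacing each edge by a unit resistor. With $d_i$ the degree of vertex $i$ in $H$ and the sum over unordered pairs of distinct vertices of $H$, the multiplicative degree-Kirchhoff index is $R^*(H)=\sum_{\{i,j\}\subseteq V(H)}d_id_j\Omega_{ij}$ (degrees and resistances taken in $H$). The subdivision $S(G)$ is the graph obtained from $G$ by replacing every edge with a path of length two (i.e., inserting one new vertex of degree 2 on each edge). *)

theory Defs
  imports Main "HOL-Library.Disjoint_Sets" Complex_Main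
begin

definition simple_graph :: "'a set \<Rightarrow> 'a set set \<Rightarrow> bool" where
  "simple_graph V E \<longleftrightarrow> finite V \<and> (\<forall>e\<in>E. e \<subseteq> V \<and> card e = 2)"

definition adj :: "'a set set \<Rightarrow> 'a \<Rightarrow> 'a \<Rightarrow> bool" where
  "adj E u v \<longleftrightarrow> {u, v} \<in> E"

definition connected_graph :: "'a set \<Rightarrow> 'a set set \<Rightarrow> bool" where
  "connected_graph V E \<longleftrightarrow> simple_graph V E \<and> V \<noteq> {} \<and>
     (\<forall>u\<in>V. \<forall>v\<in>V. (adj E)\<^sup>*\<^sup>* u v)"

definition degree :: "'a set set \<Rightarrow> 'a \<Rightarrow> nat" where
  "degree E v = card {e\<in>E. v \<in> e}"

text \<open>Resistance distance: inject a unit current at i and extract it at j in the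
  network with unit resistors on the edges; by Kirchhoff's current law and Ohm's law
  the node potentials x satisfy, at every vertex v,
  sum over neighbours u of (x v - x u) = [v = i] - [v = j].
  The effective resistance is the potential difference x i - x j (unique for connected graphs).\<close>
definition resistance :: "'a set \<Rightarrow> 'a set set \<Rightarrow> 'a \<Rightarrow> 'a \<Rightarrow> real" where
  "resistance V E i j = (THE r. \<exists>x :: 'a \<Rightarrow> real.
      (\<forall>v\<in>V. (\<Sum>u\<in>{u\<in>V. adj E v u}. x v - x u) =
               (if v = i then 1 else 0) - (if v = j then 1 else 0)) \<and>
      r = x i - x j)"

text \<open>Multiplicative degree-Kirchhoff index: sum over unordered pairs of distinct vertices,
  written as half the sum over ordered pairs of distinct vertices.\<close>
definition mult_deg_kirchhoff :: "'a set \<Rightarrow> 'a set set \<Rightarrow> real" where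
  "mult_deg_kirchhoff V E = (1/2) * (\<Sum>i\<in>V. \<Sum>j\<in>V - {i}.
      real (degree E i) * real (degree E j) * resistance V E i j)"

text \<open>Subdivision: vertices Inl v for old vertices, Inr e for a new vertex on edge e.\<close>
definition subdiv_vertices :: "'a set \<Rightarrow> 'a set set \<Rightarrow> ('a + 'a set) set" where
  "subdiv_vertices V E = Inl ` V \<union> Inr ` E"

definition subdiv_edges :: "'a set set \<Rightarrow> ('a + 'a set) set set" where
  "subdiv_edges E = {{Inl u, Inr e} | u e. e \<in> E \<and> u \<in> e}"

end

theory Submission
  imports Defs "Jordan_Normal_Form.Determinant"
begin

lemma lin_exists:
  fixes M :: "'a \<Rightarrow> 'a \<Rightarrow> real" and I :: "'a set"
  assumes fin: "finite I"
    and inj: "\<And>x. (\<forall>i\<in>I. (\<Sum>j\<in>I. M i j * x j) = 0) \<Longrightarrow> (\<forall>j\<in>I. x j = 0)"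
  shows "\<exists>x. \<forall>i\<in>I. (\<Sum>j\<in>I. M i j * x j) = b i"
proof -
  define n where "n = card I"
  obtain \<phi> where bij: "bij_betw \<phi> {0..<n} I" using ex_bij_betw_nat_finite[OF fin] n_def by blast
  define \<psi> where "\<psi> = inv_into {0..<n} \<phi>"
  have \<psi>\<phi>: "\<psi> (\<phi> k) = k" if "k < n" for k
    using bij that unfolding \<psi>_def by (simp add: bij_betw_inv_into_left)
  have \<phi>I: "\<phi> k \<in> I" if "k < n" for k using bij that by (auto simp: bij_betw_def)
  have surjI: "\<exists>k<n. i = \<phi> k" if "i \<in> I" for i using bij that by (auto simp: bij_betw_def image_iff)
  define A :: "real mat" where "A = mat n n (\<lambda>(i,j). M (\<phi> i) (\<phi> j))"
  have A: "A \<in> carrier_mat n n" unfolding A_def by simp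
  have key: "(\<Sum>j\<in>I. M (\<phi> k) j * v $ \<psi> j) = (A *\<^sub>v v) $ k"
    if "k < n" "v \<in> carrier_vec n" for k v
  proof -
    have "(\<Sum>j\<in>I. M (\<phi> k) j * v $ \<psi> j) = (\<Sum>l\<in>{0..<n}. M (\<phi> k) (\<phi> l) * v $ \<psi> (\<phi> l))"
      using sum.reindex_bij_betw[OF bij, of "\<lambda>j. M (\<phi> k) j * v $ \<psi> j"] by simp
    also have "\<dots> = (\<Sum>l\<in>{0..<n}. M (\<phi> k) (\<phi> l) * v $ l)"
      by (rule sum.cong) (auto simp: \<psi>\<phi>)
    also have "\<dots> = (A *\<^sub>v v) $ k"
      using that A by (simp add: scalar_prod_def A_def)
    finally show ?thesis .
  qed
  have "det A \<noteq> 0"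
  proof
    assume "det A = 0"
    then obtain v where v: "v \<in> carrier_vec n" "v \<noteq> 0\<^sub>v n" "A *\<^sub>v v = 0\<^sub>v n"
      using det_0_iff_vec_prod_zero_field[OF A] by blast
    have "\<forall>i\<in>I. (\<Sum>j\<in>I. M i j * v $ \<psi> j) = 0"
    proof
      fix i assume "i \<in> I"
      then obtain k where "k < n" "i = \<phi> k" using surjI by blast
      then show "(\<Sum>j\<in>I. M i j * v $ \<psi> j) = 0" using key[OF _ v(1)] v(3) by simp
    qed
    from inj[OF this] have "v $ k = 0" if "k < n" for k
      using \<phi>I[OF that] \<psi>\<phi>[OF that] by metis
    then have "v = 0\<^sub>v n" using v(1) by (intro eq_vecI) auto
    with v(2) show False by simp
  qed
  from det_non_zero_imp_unit[OF A this, of "()"]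
  obtain B where B: "B \<in> carrier_mat n n" "A * B = 1\<^sub>m n"
    unfolding Units_def ring_mat_def by auto
  define bv where "bv = vec n (\<lambda>k. b (\<phi> k))"
  define v where "v = B *\<^sub>v bv"
  have v: "v \<in> carrier_vec n" using B unfolding v_def bv_def by simp
  have Av: "A *\<^sub>v v = bv"
    unfolding v_def using A B by (simp add: assoc_mult_mat_vec[symmetric] bv_def)
  show ?thesis
  proof (intro exI ballI)
    fix i assume "i \<in> I"
    then obtain k where k: "k < n" "i = \<phi> k" using surjI by blast
    show "(\<Sum>j\<in>I. M i j * v $ \<psi> j) = b i"
      using key[OF k(1) v] Av k by (simp add: bv_def)
  qed
qed

definition nb :: "'a set \<Rightarrow> 'a set set \<Rightarrow> 'a \<Rightarrow> 'a set" where
  "nb V E v = {u\<in>V. adj E v u}"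

definition lap :: "'a set \<Rightarrow> 'a set set \<Rightarrow> ('a \<Rightarrow> real) \<Rightarrow> 'a \<Rightarrow> real" where
  "lap V E x v = (\<Sum>u\<in>nb V E v. x v - x u)"

lemma adj_sym: "adj E u v = adj E v u"
  by (simp add: adj_def insert_commute)

lemma sg_facts:
  assumes "simple_graph V E"
  shows "finite V" "finite E" "\<And>e. e \<in> E \<Longrightarrow> e \<subseteq> V" "\<And>e. e \<in> E \<Longrightarrow> card e = 2"
proof -
  show fV: "finite V" using assms by (simp add: simple_graph_def)
  show "\<And>e. e \<in> E \<Longrightarrow> e \<subseteq> V" "\<And>e. e \<in> E \<Longrightarrow> card e = 2" using assms by (auto simp: simple_graph_def)
  then have "E \<subseteq> Pow V" by auto
  then show "finite E" using fV by (meson finite_Pow_iff finite_subset)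
qed

lemma adj_in:
  assumes "simple_graph V E" "adj E u v"
  shows "u \<in> V" "v \<in> V" "u \<noteq> v"
proof -
  have e: "{u,v} \<in> E" using assms(2) by (simp add: adj_def)
  then show "u \<in> V" "v \<in> V" using sg_facts(3)[OF assms(1) e] by auto
  show "u \<noteq> v" using sg_facts(4)[OF assms(1) e] by auto
qed

lemma finite_nb: "simple_graph V E \<Longrightarrow> finite (nb V E v)"
  using sg_facts(1)[of V E] by (simp add: nb_def)

lemma lap_diff: "lap V E (\<lambda>v. x v - y v) v = lap V E x v - lap V E y v"
  unfolding lap_def sum_subtractf[symmetric] by (rule sum.cong) auto

lemma harmonic_const:
  assumes cg: "connected_graph V E" and h: "\<forall>v\<in>V. lap V E x v = 0"
    and u: "u \<in> V" and v: "v \<in> V"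
  shows "x u = x v"
proof -
  have sg: "simple_graph V E" and fV: "finite V" and ne: "V \<noteq> {}"
    using cg sg_facts(1)[of V E] by (auto simp: connected_graph_def)
  define M where "M = Max (x ` V)"
  have "M \<in> x ` V" unfolding M_def using fV ne by (intro Max_in) auto
  then obtain v0 where v0: "v0 \<in> V" "x v0 = M" by auto
  have le: "x y \<le> M" if "y \<in> V" for y unfolding M_def by (rule Max_ge) (use fV that in auto)
  have stepM: "x b = M" if "x a = M" "a \<in> V" "adj E a b" for a b
  proof -
    have s0: "(\<Sum>u\<in>nb V E a. x a - x u) = 0" using h that(2) by (simp add: lap_def)
    have nn: "\<And>u. u\<in>nb V E a \<Longrightarrow> 0 \<le> x a - x u" using le that(1) by (auto simp: nb_def)
    have "\<forall>u\<in>nb V E a. x a - x u = 0"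
      using sum_nonneg_eq_0_iff[OF finite_nb[OF sg] nn] s0 by simp
    moreover have "b \<in> nb V E a" using adj_in[OF sg that(3)] that(3) by (simp add: nb_def)
    ultimately show ?thesis using that(1) by force
  qed
  have all: "x y = M" if "y \<in> V" for y
  proof -
    have "(adj E)\<^sup>*\<^sup>* v0 y" using cg v0(1) that by (auto simp: connected_graph_def)
    then have "x y = M \<and> y \<in> V"
    proof (induction rule: rtranclp_induct)
      case base then show ?case using v0 by simp
    next
      case (step a b) then show ?case using stepM[of a b] adj_in(2)[OF sg, of a b] by auto
    qed
    then show ?thesis by simp
  qed
  show ?thesis using all u v by simp
qed

lemma res_eq:
  assumes cg: "connected_graph V E" and i: "i \<in> V" and j: "j \<in> V"
    and sol: "\<forall>v\<in>V. lap V E x v = (if v = i then 1 else 0) - (if v = j then 1 else 0)"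
  shows "resistance V E i j = x i - x j"
  unfolding resistance_def
proof (rule the_equality)
  show "\<exists>y. (\<forall>v\<in>V. (\<Sum>u\<in>{u \<in> V. adj E v u}. y v - y u) =
        (if v = i then 1 else 0) - (if v = j then 1 else 0)) \<and> x i - x j = y i - y j"
    using sol by (intro exI[of _ x]) (simp add: lap_def nb_def)
next
  fix r :: real assume "\<exists>y. (\<forall>v\<in>V. (\<Sum>u\<in>{u \<in> V. adj E v u}. y v - y u) =
        (if v = i then 1 else 0) - (if v = j then 1 else 0)) \<and> r = y i - y j"
  then obtain y where y: "\<forall>v\<in>V. lap V E y v = (if v = i then 1 else 0) - (if v = j then 1 else 0)"
    and r: "r = y i - y j" by (auto simp: lap_def nb_def)
  have "\<forall>v\<in>V. lap V E (\<lambda>v. x v - y v) v = 0" using sol y by (simp add: lap_diff)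
  from harmonic_const[OF cg this i j] show "r = x i - x j" using r by simp
qed

lemma lap_sum_zero:
  assumes sg: "simple_graph V E"
  shows "(\<Sum>v\<in>V. lap V E x v) = 0"
proof -
  have fV: "finite V" using sg_facts(1)[OF sg] .
  have "(\<Sum>v\<in>V. \<Sum>u\<in>{u\<in>V. adj E v u}. x u) = (\<Sum>u\<in>V. \<Sum>v\<in>{v\<in>V. adj E v u}. x u)"
    by (rule sum.swap_restrict[OF fV fV])
  also have "\<dots> = (\<Sum>u\<in>V. \<Sum>v\<in>{v\<in>V. adj E u v}. x u)"
  proof (rule sum.cong[OF refl])
    fix u have "{v\<in>V. adj E v u} = {v\<in>V. adj E u v}" by (metis adj_sym)
    then show "(\<Sum>v\<in>{v\<in>V. adj E v u}. x u) = (\<Sum>v\<in>{v\<in>V. adj E u v}. x u)" by simp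
  qed
  finally have "(\<Sum>v\<in>V. \<Sum>u\<in>nb V E v. x u) = (\<Sum>v\<in>V. \<Sum>u\<in>nb V E v. x v)"
    by (simp add: nb_def)
  then show ?thesis unfolding lap_def by (simp add: sum_subtractf)
qed

lemma lap_exists:
  assumes cg: "connected_graph V E" and b: "(\<Sum>v\<in>V. b v) = 0"
  shows "\<exists>x. \<forall>v\<in>V. lap V E x v = b v"
proof -
  have sg: "simple_graph V E" and fV: "finite V" and ne: "V \<noteq> {}"
    using cg sg_facts(1)[of V E] by (auto simp: connected_graph_def)
  have cpos: "real (card V) > 0" using fV ne by (simp add: card_gt_0_iff)
  define M where "M i j = (if i = j then real (card (nb V E i)) else 0) - (if adj E i j then 1 else 0) + (1::real)" for i j
  have Mx: "(\<Sum>j\<in>V. M i j * x j) = lap V E x i + (\<Sum>j\<in>V. x j)" if "i \<in> V" for i x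
  proof -
    have e1: "(\<Sum>j\<in>V. M i j * x j) = (\<Sum>j\<in>V. (if i = j then real (card (nb V E i)) * x j else 0))
       - (\<Sum>j\<in>V. (if adj E i j then x j else 0)) + (\<Sum>j\<in>V. x j)"
    proof -
      have "(\<Sum>j\<in>V. M i j * x j) = (\<Sum>j\<in>V. ((if i = j then real (card (nb V E i)) * x j else 0)
          - (if adj E i j then x j else 0)) + x j)"
        by (rule sum.cong) (auto simp: M_def algebra_simps)
      then show ?thesis by (simp only: sum.distrib sum_subtractf)
    qed
    have e2: "(\<Sum>j\<in>V. (if adj E i j then x j else 0)) = (\<Sum>j\<in>nb V E i. x j)"
      unfolding nb_def using sum.inter_filter[OF fV, of x "adj E i"] by simp
    have e3: "(\<Sum>j\<in>V. (if i = j then real (card (nb V E i)) * x j else 0)) = real (card (nb V E i)) * x i"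
      using that fV by simp
    have e4: "lap V E x i = real (card (nb V E i)) * x i - (\<Sum>j\<in>nb V E i. x j)"
      unfolding lap_def by (simp add: sum_subtractf)
    show ?thesis using e1 e2 e3 e4 by linarith
  qed
  have sumlap: "(\<Sum>i\<in>V. lap V E x i + c) = real (card V) * c" for x c
    using lap_sum_zero[OF sg, of x] by (simp add: sum.distrib)
  have "\<exists>x. \<forall>i\<in>V. (\<Sum>j\<in>V. M i j * x j) = b i"
  proof (rule lin_exists[OF fV])
    fix x assume h: "\<forall>i\<in>V. (\<Sum>j\<in>V. M i j * x j) = 0"
    have h2: "lap V E x i + (\<Sum>j\<in>V. x j) = 0" if "i \<in> V" for i
      using h that Mx[OF that, of x] by simp
    have "(\<Sum>i\<in>V. lap V E x i + (\<Sum>j\<in>V. x j)) = 0" using h2 by (intro sum.neutral) blast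
    then have S0: "(\<Sum>j\<in>V. x j) = 0" using sumlap[of x "\<Sum>j\<in>V. x j"] cpos by simp
    have hl: "\<forall>i\<in>V. lap V E x i = 0" using h2 S0 by simp
    have const: "x j = x k" if "j \<in> V" "k \<in> V" for j k using harmonic_const[OF cg hl that] .
    show "\<forall>j\<in>V. x j = 0"
    proof
      fix k assume k: "k \<in> V"
      have "(\<Sum>j\<in>V. x j) = (\<Sum>j\<in>V. x k)" using const k using sum.cong[OF refl, of V x "\<lambda>j. x k"] const k by blast
      then show "x k = 0" using S0 cpos by simp
    qed
  qed
  then obtain x where x0: "\<forall>i\<in>V. (\<Sum>j\<in>V. M i j * x j) = b i" by blast
  have x: "lap V E x i + (\<Sum>j\<in>V. x j) = b i" if "i \<in> V" for i
    using x0 that Mx[OF that, of x] by simp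
  have "(\<Sum>i\<in>V. lap V E x i + (\<Sum>j\<in>V. x j)) = (\<Sum>i\<in>V. b i)" using x by (rule sum.cong[OF refl])
  then have "(\<Sum>j\<in>V. x j) = 0" using sumlap[of x "\<Sum>j\<in>V. x j"] cpos b by simp
  then show ?thesis using x by (intro exI[of _ x]) simp
qed

lemma res_formula:
  assumes cg: "connected_graph V E" and w: "w \<in> V"
    and g: "\<forall>q\<in>V. \<forall>v\<in>V. lap V E (g q) v = (if v = q then 1 else 0) - (if v = w then 1 else 0)"
    and i: "i \<in> V" and j: "j \<in> V"
  shows "resistance V E i j = g i i + g j j - g j i - g i j"
proof -
  have "\<forall>v\<in>V. lap V E (\<lambda>v. g i v - g j v) v = (if v = i then 1 else 0) - (if v = j then 1 else 0)"
  proof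
    fix v assume v: "v \<in> V"
    have "lap V E (\<lambda>v. g i v - g j v) v = lap V E (g i) v - lap V E (g j) v" by (rule lap_diff)
    then show "lap V E (\<lambda>v. g i v - g j v) v = (if v = i then 1 else 0) - (if v = j then 1 else 0)"
      using g i j v by simp
  qed
  from res_eq[OF cg i j this] show ?thesis by simp
qed

lemma rstar:
  assumes fV: "finite V"
    and R: "\<forall>i\<in>V. \<forall>j\<in>V. resistance V E i j = g i i + g j j - g j i - g i j"
  shows "mult_deg_kirchhoff V E =
    (\<Sum>i\<in>V. real (Defs.degree E i)) * (\<Sum>i\<in>V. real (Defs.degree E i) * g i i)
    - (\<Sum>i\<in>V. \<Sum>j\<in>V. real (Defs.degree E i) * real (Defs.degree E j) * g j i)"
proof -
  define d where "d i = real (Defs.degree E i)" for i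
  define D where "D = (\<Sum>i\<in>V. d i)"
  define P where "P = (\<Sum>i\<in>V. d i * g i i)"
  define Q where "Q = (\<Sum>i\<in>V. \<Sum>j\<in>V. d i * d j * g j i)"
  have inner: "(\<Sum>j\<in>V - {i}. d i * d j * resistance V E i j) =
      (\<Sum>j\<in>V. d i * d j * (g i i + g j j - g j i - g i j))" if i: "i \<in> V" for i
  proof -
    have "(\<Sum>j\<in>V - {i}. d i * d j * resistance V E i j) = (\<Sum>j\<in>V - {i}. d i * d j * (g i i + g j j - g j i - g i j))"
      using R i by (intro sum.cong refl) auto
    also have "\<dots> = (\<Sum>j\<in>V. d i * d j * (g i i + g j j - g j i - g i j))"
      using sum_diff1[OF fV, of "\<lambda>j. d i * d j * (g i i + g j j - g j i - g i j)" i] i by simp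
    finally show ?thesis .
  qed
  have ta: "(\<Sum>i\<in>V. \<Sum>j\<in>V. d i * d j * g i i) = D * P"
    unfolding D_def P_def by (simp add: sum_distrib_left sum_distrib_right mult_ac)
  have tb: "(\<Sum>i\<in>V. \<Sum>j\<in>V. d i * d j * g j j) = D * P"
    unfolding ta[symmetric] by (subst sum.swap) (simp add: mult_ac)
  have td: "(\<Sum>i\<in>V. \<Sum>j\<in>V. d i * d j * g i j) = Q"
    unfolding Q_def by (subst sum.swap) (simp add: mult_ac)
  have "(\<Sum>i\<in>V. \<Sum>j\<in>V. d i * d j * (g i i + g j j - g j i - g i j)) =
     (\<Sum>i\<in>V. \<Sum>j\<in>V. d i * d j * g i i) + (\<Sum>i\<in>V. \<Sum>j\<in>V. d i * d j * g j j)
     - (\<Sum>i\<in>V. \<Sum>j\<in>V. d i * d j * g j i) - (\<Sum>i\<in>V. \<Sum>j\<in>V. d i * d j * g i j)"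
    by (simp add: algebra_simps sum.distrib sum_subtractf)
  also have "\<dots> = 2 * (D * P - Q)" using ta tb td unfolding Q_def by simp
  finally have tot: "(\<Sum>i\<in>V. \<Sum>j\<in>V. d i * d j * (g i i + g j j - g j i - g i j)) = 2 * (D * P - Q)" .
  have "mult_deg_kirchhoff V E = (1/2) * (\<Sum>i\<in>V. \<Sum>j\<in>V. d i * d j * (g i i + g j j - g j i - g i j))"
    unfolding mult_deg_kirchhoff_def d_def[symmetric] using inner by simp
  also have "\<dots> = D * P - Q" using tot by simp
  finally show ?thesis unfolding D_def P_def Q_def d_def .
qed

lemma SW:
  assumes sg: "simple_graph V E"
  shows "(\<Sum>f\<in>E. \<Sum>c\<in>f. F c f) = (\<Sum>c\<in>V. \<Sum>f\<in>{f\<in>E. c\<in>f}. F c f)"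
proof -
  have fV: "finite V" and fE: "finite E" using sg_facts[OF sg] by auto
  have "(\<Sum>f\<in>E. \<Sum>c\<in>f. F c f) = (\<Sum>f\<in>E. \<Sum>c\<in>{c\<in>V. c\<in>f}. F c f)"
  proof (rule sum.cong[OF refl])
    fix f assume "f \<in> E"
    then have "{c\<in>V. c\<in>f} = f" using sg_facts(3)[OF sg] by auto
    then show "(\<Sum>c\<in>f. F c f) = (\<Sum>c\<in>{c\<in>V. c\<in>f}. F c f)" by simp
  qed
  also have "\<dots> = (\<Sum>c\<in>V. \<Sum>f\<in>{f\<in>E. c\<in>f}. F c f)"
    by (rule sum.swap_restrict[OF fE fV])
  finally show ?thesis .
qed

lemma HS:
  assumes sg: "simple_graph V E"
  shows "(\<Sum>f\<in>E. \<Sum>c\<in>f. h c) = (\<Sum>c\<in>V. real (Defs.degree E c) * h c)"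
  unfolding SW[OF sg] by (simp add: Defs.degree_def)

lemma handshake:
  assumes sg: "simple_graph V E"
  shows "(\<Sum>c\<in>V. real (Defs.degree E c)) = 2 * real (card E)"
proof -
  have "(\<Sum>c\<in>V. real (Defs.degree E c)) = (\<Sum>c\<in>V. real (Defs.degree E c) * 1)" by simp
  also have "\<dots> = (\<Sum>f\<in>E. \<Sum>c\<in>f. (1::real))" using HS[OF sg, of "\<lambda>c. 1"] by simp
  also have "\<dots> = (\<Sum>f\<in>E. 2)" using sg_facts(4)[OF sg] by (intro sum.cong refl) simp
  finally show ?thesis by simp
qed

lemma nb_bij:
  assumes sg: "simple_graph V E" and v: "v \<in> V"
  shows "bij_betw (\<lambda>u. {v,u}) (nb V E v) {f\<in>E. v\<in>f}"
proof (rule bij_betwI')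
  fix x y assume "x \<in> nb V E v" "y \<in> nb V E v"
  show "({v, x} = {v, y}) = (x = y)" by (auto simp: doubleton_eq_iff)
next
  fix x assume "x \<in> nb V E v"
  then show "{v, x} \<in> {f \<in> E. v \<in> f}" by (simp add: nb_def adj_def)
next
  fix f assume f: "f \<in> {f \<in> E. v \<in> f}"
  then have fE: "f \<in> E" and vf: "v \<in> f" by auto
  obtain a b where ab: "f = {a,b}" "a \<noteq> b" using sg_facts(4)[OF sg fE] card_2_iff by metis
  obtain u where u: "f = {v,u}" using ab vf by (metis insert_commute insertE singletonD)
  have "u \<in> V" using sg_facts(3)[OF sg fE] u by auto
  then have "u \<in> nb V E v" using fE u by (simp add: nb_def adj_def)
  then show "\<exists>x\<in>nb V E v. f = {v, x}" using u by blast
qed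

lemma sum_nb:
  assumes sg: "simple_graph V E" and v: "v \<in> V"
  shows "(\<Sum>f\<in>{f\<in>E. v\<in>f}. H f) = (\<Sum>u\<in>nb V E v. H {v,u})"
  using sum.reindex_bij_betw[OF nb_bij[OF sg v], of H] by simp

lemma deg_nb:
  assumes sg: "simple_graph V E" and v: "v \<in> V"
  shows "Defs.degree E v = card (nb V E v)"
  unfolding Defs.degree_def using bij_betw_same_card[OF nb_bij[OF sg v]] by simp

lemma adjS: "adj (subdiv_edges E) a b \<longleftrightarrow>
   (\<exists>u f. f \<in> E \<and> u \<in> f \<and> ((a = Inl u \<and> b = Inr f) \<or> (a = Inr f \<and> b = Inl u)))"
  unfolding adj_def subdiv_edges_def by (auto simp: doubleton_eq_iff)

lemma sgS:
  assumes sg: "simple_graph V E"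
  shows "simple_graph (subdiv_vertices V E) (subdiv_edges E)"
proof -
  have fV: "finite V" and fE: "finite E" using sg_facts[OF sg] by auto
  show ?thesis unfolding simple_graph_def
  proof (intro conjI ballI)
    show "finite (subdiv_vertices V E)" using fV fE by (simp add: subdiv_vertices_def)
  next
    fix e assume "e \<in> subdiv_edges E"
    then obtain u f where e: "e = {Inl u, Inr f}" "f \<in> E" "u \<in> f" by (auto simp: subdiv_edges_def)
    then have "u \<in> V" using sg_facts(3)[OF sg] by auto
    then show "e \<subseteq> subdiv_vertices V E" using e by (auto simp: subdiv_vertices_def)
    show "card e = 2" using e by simp
  qed
qed

lemma nbS_Inl:
  "nb (subdiv_vertices V E) (subdiv_edges E) (Inl v) = Inr ` {f\<in>E. v\<in>f}"
  unfolding nb_def adjS by (auto simp: subdiv_vertices_def)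

lemma nbS_Inr:
  assumes sg: "simple_graph V E" and f: "f \<in> E"
  shows "nb (subdiv_vertices V E) (subdiv_edges E) (Inr f) = Inl ` f"
  using sg_facts(3)[OF sg f] f unfolding nb_def adjS by (auto simp: subdiv_vertices_def)

lemma lapS_Inl:
  "lap (subdiv_vertices V E) (subdiv_edges E) x (Inl v) = (\<Sum>f\<in>{f\<in>E. v\<in>f}. x (Inl v) - x (Inr f))"
  unfolding lap_def nbS_Inl by (subst sum.reindex) (auto simp: inj_on_def)

lemma lapS_Inr:
  assumes sg: "simple_graph V E" and f: "f \<in> E"
  shows "lap (subdiv_vertices V E) (subdiv_edges E) x (Inr f) = (\<Sum>u\<in>f. x (Inr f) - x (Inl u))"
  unfolding lap_def nbS_Inr[OF sg f] by (subst sum.reindex) (auto simp: inj_on_def)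

lemma degS_Inl:
  fixes V :: "'a set"
  assumes sg: "simple_graph V E" and v: "v \<in> V"
  shows "Defs.degree (subdiv_edges E) (Inl v) = Defs.degree E v"
proof -
  have "Inl v \<in> subdiv_vertices V E" using v by (simp add: subdiv_vertices_def)
  have "Defs.degree (subdiv_edges E) (Inl v) = card (Inr ` {f\<in>E. v\<in>f} :: ('a + 'a set) set)"
    unfolding deg_nb[OF sgS[OF sg] \<open>Inl v \<in> _\<close>] nbS_Inl by simp
  also have "\<dots> = card {f\<in>E. v\<in>f}" by (simp add: card_image)
  finally show ?thesis by (simp add: Defs.degree_def)
qed

lemma degS_Inr:
  fixes V :: "'a set"
  assumes sg: "simple_graph V E" and f: "f \<in> E"
  shows "Defs.degree (subdiv_edges E) (Inr f) = 2"
proof -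
  have "Inr f \<in> subdiv_vertices V E" using f by (simp add: subdiv_vertices_def)
  have "Defs.degree (subdiv_edges E) (Inr f) = card (Inl ` f :: ('a + 'a set) set)"
    unfolding deg_nb[OF sgS[OF sg] \<open>Inr f \<in> _\<close>] nbS_Inr[OF sg f] by simp
  also have "\<dots> = card f" by (simp add: card_image)
  finally show ?thesis using sg_facts(4)[OF sg f] by simp
qed

lemma sumS:
  assumes fV: "finite V" and fE: "finite E"
  shows "(\<Sum>y\<in>subdiv_vertices V E. h y) = (\<Sum>v\<in>V. h (Inl v)) + (\<Sum>f\<in>E. h (Inr f))"
proof -
  have "(\<Sum>y\<in>subdiv_vertices V E. h y) = (\<Sum>y\<in>Inl ` V. h y) + (\<Sum>y\<in>Inr ` E. h y)"
    unfolding subdiv_vertices_def by (rule sum.union_disjoint) (use fV fE in auto)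
  also have "\<dots> = (\<Sum>v\<in>V. h (Inl v)) + (\<Sum>f\<in>E. h (Inr f))"
    by (simp add: sum.reindex inj_on_def)
  finally show ?thesis .
qed

lemma cgS:
  assumes cg: "connected_graph V E"
  shows "connected_graph (subdiv_vertices V E) (subdiv_edges E)"
proof -
  have sg: "simple_graph V E" and ne: "V \<noteq> {}" using cg by (auto simp: connected_graph_def)
  let ?A = "adj (subdiv_edges E)"
  have lift: "?A\<^sup>*\<^sup>* (Inl u) (Inl v)" if "(adj E)\<^sup>*\<^sup>* u v" for u v
    using that
  proof (induction rule: rtranclp_induct)
    case base then show ?case by simp
  next
    case (step a b)
    have e: "{a,b} \<in> E" using step(2) by (simp add: adj_def)
    have "?A (Inl a) (Inr {a,b})" unfolding adjS using e by blast
    moreover have "?A (Inr {a,b}) (Inl b)" unfolding adjS using e by blast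
    ultimately show ?case using step(3) by (meson rtranclp.rtrancl_into_rtrancl)
  qed
  obtain v0 where v0: "v0 \<in> V" using ne by auto
  have toV: "?A\<^sup>*\<^sup>* (Inl v0) y" if "y \<in> subdiv_vertices V E" for y
  proof -
    from that consider (l) u where "u \<in> V" "y = Inl u" | (r) f where "f \<in> E" "y = Inr f"
      by (auto simp: subdiv_vertices_def)
    then show ?thesis
    proof cases
      case (l u) then show ?thesis using lift cg v0 by (auto simp: connected_graph_def)
    next
      case (r f)
      obtain a b where ab: "f = {a,b}" using sg_facts(4)[OF sg r(1)] card_2_iff by metis
      have aV: "a \<in> V" using sg_facts(3)[OF sg r(1)] ab by auto
      have "?A (Inl a) (Inr f)" unfolding adjS using r(1) ab by blast
      moreover have "?A\<^sup>*\<^sup>* (Inl v0) (Inl a)" using lift cg v0 aV by (auto simp: connected_graph_def)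
      ultimately show ?thesis using r(2) by (meson rtranclp.rtrancl_into_rtrancl)
    qed
  qed
  have symA: "?A\<^sup>*\<^sup>* y z \<Longrightarrow> ?A\<^sup>*\<^sup>* z y" for y z
  proof (induction rule: rtranclp_induct)
    case base then show ?case by simp
  next
    case (step a b)
    have "?A b a" using step(2) adj_sym by metis
    then show ?case using step(3) by (meson converse_rtranclp_into_rtranclp)
  qed
  show ?thesis unfolding connected_graph_def
  proof (intro conjI ballI)
    show "simple_graph (subdiv_vertices V E) (subdiv_edges E)" using sgS[OF sg] .
    show "subdiv_vertices V E \<noteq> {}" using v0 by (auto simp: subdiv_vertices_def)
    fix y z assume "y \<in> subdiv_vertices V E" "z \<in> subdiv_vertices V E"
    then show "?A\<^sup>*\<^sup>* y z" using toV symA by (meson rtranclp_trans)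
  qed
qed

lemma K1:
  assumes sg: "simple_graph V E" and p: "p \<in> V" and v: "v \<in> V"
    and g: "lap V E (g p) v = (if v = p then 1 else 0) - (if v = w then 1 else 0)"
  shows "(\<Sum>e\<in>{e\<in>E. v\<in>e}. g p v - (1/2) * (\<Sum>u\<in>e. g p u)) =
     (1/2) * ((if v = p then 1 else 0) - (if v = w then 1 else 0))"
proof -
  have "(\<Sum>e\<in>{e\<in>E. v\<in>e}. g p v - (1/2) * (\<Sum>u\<in>e. g p u)) =
      (\<Sum>u\<in>nb V E v. g p v - (1/2) * (\<Sum>u'\<in>{v,u}. g p u'))"
    by (rule sum_nb[OF sg v])
  also have "\<dots> = (\<Sum>u\<in>nb V E v. (1/2) * (g p v - g p u))"
  proof (rule sum.cong[OF refl])
    fix u assume "u \<in> nb V E v"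
    then have "u \<noteq> v" using adj_in(3)[OF sg] by (auto simp: nb_def)
    then show "g p v - (1/2) * (\<Sum>u'\<in>{v,u}. g p u') = (1/2) * (g p v - g p u)" by (simp add: field_simps)
  qed
  also have "\<dots> = (1/2) * lap V E (g p) v" unfolding lap_def by (simp add: sum_distrib_left)
  finally show ?thesis using g by simp
qed

lemma gS_lap:
  fixes V :: "'a set" and E :: "'a set set" and g :: "'a \<Rightarrow> 'a \<Rightarrow> real"
  assumes sg: "simple_graph V E" and w: "w \<in> V"
    and g: "\<forall>q\<in>V. \<forall>v\<in>V. lap V E (g q) v = (if v = q then 1 else 0) - (if v = w then 1 else 0)"
    and gS_def: "gS = (\<lambda>q y. case q of Inl p \<Rightarrow> (case y of Inl v \<Rightarrow> 2 * g p v | Inr e \<Rightarrow> (\<Sum>u\<in>e. g p u))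
        | Inr f \<Rightarrow> (case y of Inl v \<Rightarrow> (\<Sum>c\<in>f. g c v)
                     | Inr e \<Rightarrow> (1/2) * (\<Sum>c\<in>f. \<Sum>u\<in>e. g c u) + (if e = f then 1/2 else 0)))"
  shows "\<forall>q\<in>subdiv_vertices V E. \<forall>y\<in>subdiv_vertices V E.
     lap (subdiv_vertices V E) (subdiv_edges E) (gS q) y = (if y = q then 1 else 0) - (if y = Inl w then 1 else 0)"
proof (intro ballI)
  fix q y assume q: "q \<in> subdiv_vertices V E" and y: "y \<in> subdiv_vertices V E"
  have Ksum: "(\<Sum>e\<in>{e\<in>E. v\<in>e}. g p v - (1/2) * (\<Sum>u\<in>e. g p u)) =
     (1/2) * ((if v = p then 1 else 0) - (if v = w then 1 else 0))" if "p \<in> V" "v \<in> V" for p v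
    using K1[OF sg that] g that by blast
  have c2: "card f = 2" if "f \<in> E" for f using sg_facts(4)[OF sg that] .
  have fV: "f \<subseteq> V" if "f \<in> E" for f using sg_facts(3)[OF sg that] .
  have fin: "finite f" if "f \<in> E" for f by (rule card_ge_0_finite) (simp add: c2[OF that])
  show "lap (subdiv_vertices V E) (subdiv_edges E) (gS q) y = (if y = q then 1 else 0) - (if y = Inl w then 1 else 0)"
  proof (cases q)
    case (Inl p)
    then have p: "p \<in> V" using q by (auto simp: subdiv_vertices_def)
    show ?thesis
    proof (cases y)
      case (Inl v)
      then have v: "v \<in> V" using y by (auto simp: subdiv_vertices_def)
      have "lap (subdiv_vertices V E) (subdiv_edges E) (gS q) y =
          (\<Sum>e\<in>{e\<in>E. v\<in>e}. 2 * g p v - (\<Sum>u\<in>e. g p u))"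
        unfolding Inl \<open>q = Inl p\<close> lapS_Inl by (simp add: gS_def)
      also have "\<dots> = (\<Sum>e\<in>{e\<in>E. v\<in>e}. 2 * (g p v - (1/2) * (\<Sum>u\<in>e. g p u)))"
        by (rule sum.cong[OF refl]) (simp add: algebra_simps)
      also have "\<dots> = 2 * (\<Sum>e\<in>{e\<in>E. v\<in>e}. g p v - (1/2) * (\<Sum>u\<in>e. g p u))"
        by (rule sum_distrib_left[symmetric])
      also have "\<dots> = (if v = p then 1 else 0) - (if v = w then 1 else 0)"
        using Ksum[OF p v] by simp
      finally show ?thesis using Inl \<open>q = Inl p\<close> by simp
    next
      case (Inr e)
      then have e: "e \<in> E" using y by (auto simp: subdiv_vertices_def)
      have "lap (subdiv_vertices V E) (subdiv_edges E) (gS q) y =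
          (\<Sum>u\<in>e. (\<Sum>u\<in>e. g p u) - 2 * g p u)"
        unfolding Inr \<open>q = Inl p\<close> lapS_Inr[OF sg e] by (simp add: gS_def)
      also have "\<dots> = real (card e) * (\<Sum>u\<in>e. g p u) - 2 * (\<Sum>u\<in>e. g p u)"
        by (simp add: sum_subtractf sum_distrib_left)
      also have "\<dots> = 0" using c2[OF e] by simp
      finally show ?thesis using Inr \<open>q = Inl p\<close> by simp
    qed
  next
    case (Inr f)
    then have f: "f \<in> E" using q by (auto simp: subdiv_vertices_def)
    show ?thesis
    proof (cases y)
      case (Inl v)
      then have v: "v \<in> V" using y by (auto simp: subdiv_vertices_def)
      have "lap (subdiv_vertices V E) (subdiv_edges E) (gS q) y =
          (\<Sum>e\<in>{e\<in>E. v\<in>e}. (\<Sum>c\<in>f. g c v) - ((1/2) * (\<Sum>c\<in>f. \<Sum>u\<in>e. g c u) + (if e = f then 1/2 else 0)))"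
        unfolding Inl \<open>q = Inr f\<close> lapS_Inl by (simp add: gS_def)
      also have "\<dots> = (\<Sum>e\<in>{e\<in>E. v\<in>e}. (\<Sum>c\<in>f. g c v - (1/2) * (\<Sum>u\<in>e. g c u))
          - (if e = f then 1/2 else 0))"
        by (rule sum.cong[OF refl]) (simp add: sum_subtractf sum_distrib_left)
      also have "\<dots> = (\<Sum>e\<in>{e\<in>E. v\<in>e}. (\<Sum>c\<in>f. g c v - (1/2) * (\<Sum>u\<in>e. g c u)))
          - (\<Sum>e\<in>{e\<in>E. v\<in>e}. (if e = f then 1/2 else 0))"
        by (rule sum_subtractf)
      also have "(\<Sum>e\<in>{e\<in>E. v\<in>e}. (if e = f then (1::real)/2 else 0)) = (if v \<in> f then 1/2 else 0)"
        using f fin by (simp add: sum.delta' sg_facts(2)[OF sg])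
      also have "(\<Sum>e\<in>{e\<in>E. v\<in>e}. (\<Sum>c\<in>f. g c v - (1/2) * (\<Sum>u\<in>e. g c u)))
          = (\<Sum>c\<in>f. \<Sum>e\<in>{e\<in>E. v\<in>e}. g c v - (1/2) * (\<Sum>u\<in>e. g c u))"
        by (rule sum.swap)
      also have "\<dots> = (\<Sum>c\<in>f. (1/2) * ((if v = c then 1 else 0) - (if v = w then 1 else 0)))"
      proof (rule sum.cong[OF refl])
        fix c assume "c \<in> f"
        then have cV: "c \<in> V" using fV[OF f] by auto
        show "(\<Sum>e\<in>{e\<in>E. v\<in>e}. g c v - (1/2) * (\<Sum>u\<in>e. g c u)) =
            (1/2) * ((if v = c then 1 else 0) - (if v = w then 1 else 0))" by (rule Ksum[OF cV v])
      qed
      also have "\<dots> = (1/2) * ((if v \<in> f then 1 else 0) - real (card f) * (if v = w then 1 else 0))"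
      proof -
        have "(\<Sum>c\<in>f. (1/2::real) * ((if v = c then 1 else 0) - (if v = w then 1 else 0))) =
            (1/2) * ((\<Sum>c\<in>f. (if v = c then 1 else 0)) - (\<Sum>c\<in>f. (if v = w then 1 else 0)))"
          by (simp only: sum_distrib_left[symmetric] sum_subtractf)
        also have "(\<Sum>c\<in>f. (if v = c then (1::real) else 0)) = (if v \<in> f then 1 else 0)"
          using fin[OF f] by (simp add: sum.delta)
        also have "(\<Sum>c\<in>f. (if v = w then (1::real) else 0)) = real (card f) * (if v = w then 1 else 0)"
          by simp
        finally show ?thesis .
      qed
      finally show ?thesis using Inl \<open>q = Inr f\<close> c2[OF f] by simp
    next
      case (Inr e)
      then have e: "e \<in> E" using y by (auto simp: subdiv_vertices_def)
      have "lap (subdiv_vertices V E) (subdiv_edges E) (gS q) y =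
          (\<Sum>u\<in>e. ((1/2) * (\<Sum>c\<in>f. \<Sum>u\<in>e. g c u) + (if e = f then 1/2 else 0)) - (\<Sum>c\<in>f. g c u))"
        unfolding Inr \<open>q = Inr f\<close> lapS_Inr[OF sg e] by (simp add: gS_def)
      also have "\<dots> = real (card e) * ((1/2) * (\<Sum>c\<in>f. \<Sum>u\<in>e. g c u) + (if e = f then 1/2 else 0))
           - (\<Sum>u\<in>e. \<Sum>c\<in>f. g c u)"
        by (simp add: sum_subtractf)
      also have "(\<Sum>u\<in>e. \<Sum>c\<in>f. g c u) = (\<Sum>c\<in>f. \<Sum>u\<in>e. g c u)" by (rule sum.swap)
      finally show ?thesis using Inr \<open>q = Inr f\<close> c2[OF e] by simp
    qed
  qed
qed

theorem theorem2p5: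
  fixes V :: "'a set" and E :: "'a set set"
  assumes "connected_graph V E" and "card V \<ge> 2"
  shows "mult_deg_kirchhoff (subdiv_vertices V E) (subdiv_edges E)
         = 8 * mult_deg_kirchhoff V E
           + 2 * real (card E) * (2 * real (card E) - 2 * real (card V) + 1)"
proof -
  have cg: "connected_graph V E" by fact
  have sg: "simple_graph V E" and ne: "V \<noteq> {}" using cg by (auto simp: connected_graph_def)
  have fV: "finite V" and fE: "finite E" using sg_facts[OF sg] by auto
  have c2: "card f = 2" if "f \<in> E" for f using sg_facts(4)[OF sg that] .
  have fsV: "f \<subseteq> V" if "f \<in> E" for f using sg_facts(3)[OF sg that] .
  have fin: "finite f" if "f \<in> E" for f by (rule card_ge_0_finite) (simp add: c2[OF that])
  obtain w where w: "w \<in> V" using ne by auto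
  have "\<forall>q\<in>V. \<exists>x. \<forall>v\<in>V. lap V E x v = (if v = q then 1 else 0) - (if v = w then 1 else 0)"
  proof
    fix q assume q: "q \<in> V"
    have "(\<Sum>v\<in>V. (if v = q then 1 else 0) - (if v = w then 1 else 0)) = (0::real)"
      using q w fV by (simp add: sum_subtractf sum.delta)
    then show "\<exists>x. \<forall>v\<in>V. lap V E x v = (if v = q then 1 else 0) - (if v = w then 1 else 0)"
      by (rule lap_exists[OF cg])
  qed
  then obtain g where g: "\<forall>q\<in>V. \<forall>v\<in>V. lap V E (g q) v = (if v = q then 1 else 0) - (if v = w then 1 else 0)"
    by (metis bchoice)
  define VS where "VS = subdiv_vertices V E"
  define ES where "ES = subdiv_edges E"
  define gS where "gS = (\<lambda>q y. case q of Inl p \<Rightarrow> (case y of Inl v \<Rightarrow> 2 * g p v | Inr e \<Rightarrow> (\<Sum>u\<in>e. g p u))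
        | Inr f \<Rightarrow> (case y of Inl v \<Rightarrow> (\<Sum>c\<in>f. g c v)
                     | Inr e \<Rightarrow> (1/2) * (\<Sum>c\<in>f. \<Sum>u\<in>e. g c u) + (if e = f then 1/2 else (0::real))))"
  have gSll: "gS (Inl p) (Inl v) = 2 * g p v" for p v by (simp add: gS_def)
  have gSlr: "gS (Inl p) (Inr e) = (\<Sum>u\<in>e. g p u)" for p e by (simp add: gS_def)
  have gSrl: "gS (Inr f) (Inl v) = (\<Sum>c\<in>f. g c v)" for f v by (simp add: gS_def)
  have gSrr: "gS (Inr f) (Inr e) = (1/2) * (\<Sum>c\<in>f. \<Sum>u\<in>e. g c u) + (if e = f then 1/2 else 0)" for f e
    by (simp add: gS_def)
  have lS: "\<forall>q\<in>VS. \<forall>y\<in>VS. lap VS ES (gS q) y = (if y = q then 1 else 0) - (if y = Inl w then 1 else 0)"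
    unfolding VS_def ES_def by (rule gS_lap[OF sg w g gS_def])
  have cgS': "connected_graph VS ES" unfolding VS_def ES_def by (rule cgS[OF cg])
  have wS: "Inl w \<in> VS" using w by (simp add: VS_def subdiv_vertices_def)
  have fVS: "finite VS" using fV fE by (simp add: VS_def subdiv_vertices_def)
  have RG: "\<forall>i\<in>V. \<forall>j\<in>V. resistance V E i j = g i i + g j j - g j i - g i j"
    using res_formula[OF cg w g] by blast
  have RS: "\<forall>i\<in>VS. \<forall>j\<in>VS. resistance VS ES i j = gS i i + gS j j - gS j i - gS i j"
    using res_formula[OF cgS' wS lS] by blast
  define d where "d i = real (Defs.degree E i)" for i
  define dS where "dS i = real (Defs.degree ES i)" for i
  define m where "m = real (card E)"
  define n where "n = real (card V)"
  define P where "P = (\<Sum>i\<in>V. d i * g i i)"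
  define Q where "Q = (\<Sum>i\<in>V. \<Sum>j\<in>V. d i * d j * g j i)"
  define A where "A = (\<Sum>c\<in>V. \<Sum>u\<in>nb V E c. g c u)"
  have rG: "mult_deg_kirchhoff V E = (\<Sum>i\<in>V. d i) * P - Q"
    using rstar[OF fV RG] unfolding d_def P_def Q_def .
  have rS: "mult_deg_kirchhoff VS ES = (\<Sum>i\<in>VS. dS i) * (\<Sum>i\<in>VS. dS i * gS i i)
      - (\<Sum>i\<in>VS. \<Sum>j\<in>VS. dS i * dS j * gS j i)"
    using rstar[OF fVS RS] unfolding dS_def .
  have dSl: "dS (Inl v) = d v" if "v \<in> V" for v
    unfolding dS_def d_def ES_def using degS_Inl[OF sg that] by simp
  have dSr: "dS (Inr f) = 2" if "f \<in> E" for f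
    unfolding dS_def ES_def using degS_Inr[OF sg that] by simp
  have sS: "(\<Sum>y\<in>VS. h y) = (\<Sum>v\<in>V. h (Inl v)) + (\<Sum>f\<in>E. h (Inr f))" for h :: "_ \<Rightarrow> real"
    unfolding VS_def by (rule sumS[OF fV fE])
  have hs: "(\<Sum>i\<in>V. d i) = 2 * m" unfolding d_def m_def using handshake[OF sg] by simp
  have HS': "(\<Sum>f\<in>E. \<Sum>c\<in>f. h c) = (\<Sum>c\<in>V. d c * h c)" for h
    unfolding d_def by (rule HS[OF sg])
  have DS: "(\<Sum>i\<in>VS. dS i) = 4 * m"
  proof -
    have "(\<Sum>i\<in>VS. dS i) = (\<Sum>v\<in>V. dS (Inl v)) + (\<Sum>f\<in>E. dS (Inr f))" by (rule sS)
    also have "(\<Sum>v\<in>V. dS (Inl v)) = (\<Sum>v\<in>V. d v)" using dSl by (intro sum.cong refl) simp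
    also have "(\<Sum>f\<in>E. dS (Inr f)) = (\<Sum>f\<in>E. 2)" using dSr by (intro sum.cong refl) simp
    finally show ?thesis using hs by (simp add: m_def)
  qed
  have PA: "(\<Sum>f\<in>E. \<Sum>c\<in>f. \<Sum>u\<in>f. g c u) = P + A"
  proof -
    have "(\<Sum>f\<in>E. \<Sum>c\<in>f. \<Sum>u\<in>f. g c u) = (\<Sum>c\<in>V. \<Sum>f\<in>{f\<in>E. c\<in>f}. \<Sum>u\<in>f. g c u)"
      by (rule SW[OF sg])
    also have "\<dots> = (\<Sum>c\<in>V. \<Sum>u\<in>nb V E c. \<Sum>u'\<in>{c,u}. g c u')"
      by (rule sum.cong[OF refl]) (rule sum_nb[OF sg])
    also have "\<dots> = (\<Sum>c\<in>V. \<Sum>u\<in>nb V E c. g c c + g c u)"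
    proof (intro sum.cong[OF refl])
      fix c u assume "c \<in> V" "u \<in> nb V E c"
      then have "u \<noteq> c" using adj_in(3)[OF sg] by (auto simp: nb_def)
      then show "(\<Sum>u'\<in>{c,u}. g c u') = g c c + g c u" by simp
    qed
    also have "\<dots> = (\<Sum>c\<in>V. d c * g c c + (\<Sum>u\<in>nb V E c. g c u))"
    proof (rule sum.cong[OF refl])
      fix c assume c: "c \<in> V"
      show "(\<Sum>u\<in>nb V E c. g c c + g c u) = d c * g c c + (\<Sum>u\<in>nb V E c. g c u)"
        unfolding d_def deg_nb[OF sg c] by (simp add: sum.distrib)
    qed
    also have "\<dots> = P + A" unfolding P_def A_def by (rule sum.distrib)
    finally show ?thesis .
  qed
  have PmA: "P - A = n - 1"
  proof -
    have "P - A = (\<Sum>c\<in>V. d c * g c c - (\<Sum>u\<in>nb V E c. g c u))"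
      unfolding P_def A_def by (rule sum_subtractf[symmetric])
    also have "\<dots> = (\<Sum>c\<in>V. lap V E (g c) c)"
    proof (rule sum.cong[OF refl])
      fix c assume c: "c \<in> V"
      show "d c * g c c - (\<Sum>u\<in>nb V E c. g c u) = lap V E (g c) c"
        unfolding d_def deg_nb[OF sg c] lap_def by (simp add: sum_subtractf)
    qed
    also have "\<dots> = (\<Sum>c\<in>V. 1 - (if c = w then 1 else 0))"
      using g by (intro sum.cong refl) simp
    also have "\<dots> = n - 1" using fV w by (simp add: sum_subtractf n_def)
    finally show ?thesis .
  qed
  have PS: "(\<Sum>i\<in>VS. dS i * gS i i) = 3 * P + A + m"
  proof -
    have "(\<Sum>i\<in>VS. dS i * gS i i) = (\<Sum>v\<in>V. dS (Inl v) * gS (Inl v) (Inl v)) + (\<Sum>f\<in>E. dS (Inr f) * gS (Inr f) (Inr f))"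
      by (rule sS)
    also have "(\<Sum>v\<in>V. dS (Inl v) * gS (Inl v) (Inl v)) = (\<Sum>v\<in>V. 2 * (d v * g v v))"
      using dSl by (intro sum.cong refl) (simp add: gSll)
    also have "\<dots> = 2 * P" unfolding P_def by (rule sum_distrib_left[symmetric])
    also have "(\<Sum>f\<in>E. dS (Inr f) * gS (Inr f) (Inr f)) = (\<Sum>f\<in>E. (\<Sum>c\<in>f. \<Sum>u\<in>f. g c u) + 1)"
      using dSr by (intro sum.cong refl) (simp add: gSrr algebra_simps)
    also have "\<dots> = P + A + m" using PA by (simp add: sum.distrib m_def)
    finally show ?thesis by simp
  qed
  have Qswap: "Q = (\<Sum>j\<in>V. \<Sum>i\<in>V. d i * d j * g j i)" unfolding Q_def by (rule sum.swap)
  define F where "F i j = dS i * dS j * gS j i" for i j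
  have QS0: "(\<Sum>i\<in>VS. \<Sum>j\<in>VS. dS i * dS j * gS j i) =
     (\<Sum>v\<in>V. (\<Sum>p\<in>V. F (Inl v) (Inl p)) + (\<Sum>f\<in>E. F (Inl v) (Inr f)))
     + (\<Sum>e\<in>E. (\<Sum>p\<in>V. F (Inr e) (Inl p)) + (\<Sum>f\<in>E. F (Inr e) (Inr f)))"
  proof -
    have "(\<Sum>i\<in>VS. \<Sum>j\<in>VS. dS i * dS j * gS j i) = (\<Sum>i\<in>VS. (\<Sum>p\<in>V. F i (Inl p)) + (\<Sum>f\<in>E. F i (Inr f)))"
      unfolding F_def by (rule sum.cong[OF refl]) (rule sS)
    also have "\<dots> = (\<Sum>v\<in>V. (\<Sum>p\<in>V. F (Inl v) (Inl p)) + (\<Sum>f\<in>E. F (Inl v) (Inr f)))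
     + (\<Sum>e\<in>E. (\<Sum>p\<in>V. F (Inr e) (Inl p)) + (\<Sum>f\<in>E. F (Inr e) (Inr f)))" by (rule sS)
    finally show ?thesis .
  qed
  have B1: "(\<Sum>v\<in>V. \<Sum>p\<in>V. F (Inl v) (Inl p)) = 2 * Q"
  proof -
    have "(\<Sum>v\<in>V. \<Sum>p\<in>V. F (Inl v) (Inl p)) = (\<Sum>v\<in>V. \<Sum>p\<in>V. 2 * (d v * d p * g p v))"
      using dSl by (intro sum.cong refl) (simp add: F_def gSll)
    also have "\<dots> = 2 * Q" unfolding Q_def by (simp add: sum_distrib_left)
    finally show ?thesis .
  qed
  have B2: "(\<Sum>v\<in>V. \<Sum>f\<in>E. F (Inl v) (Inr f)) = 2 * Q"
  proof -
    have "(\<Sum>v\<in>V. \<Sum>f\<in>E. F (Inl v) (Inr f)) = (\<Sum>v\<in>V. 2 * d v * (\<Sum>f\<in>E. \<Sum>c\<in>f. g c v))"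
      using dSl dSr by (intro sum.cong refl) (simp add: F_def gSrl sum_distrib_left mult_ac)
    also have "\<dots> = (\<Sum>v\<in>V. 2 * d v * (\<Sum>c\<in>V. d c * g c v))"
      by (intro sum.cong refl) (simp add: HS')
    also have "\<dots> = 2 * Q" unfolding Q_def by (simp add: sum_distrib_left mult_ac)
    finally show ?thesis .
  qed
  have B3: "(\<Sum>e\<in>E. \<Sum>p\<in>V. F (Inr e) (Inl p)) = 2 * Q"
  proof -
    have "(\<Sum>e\<in>E. \<Sum>p\<in>V. F (Inr e) (Inl p)) = (\<Sum>e\<in>E. \<Sum>p\<in>V. 2 * d p * (\<Sum>u\<in>e. g p u))"
      using dSl dSr by (intro sum.cong refl) (simp add: F_def gSlr)
    also have "\<dots> = (\<Sum>p\<in>V. \<Sum>e\<in>E. 2 * d p * (\<Sum>u\<in>e. g p u))" by (rule sum.swap)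
    also have "\<dots> = (\<Sum>p\<in>V. 2 * d p * (\<Sum>e\<in>E. \<Sum>u\<in>e. g p u))"
      by (simp add: sum_distrib_left)
    also have "\<dots> = (\<Sum>p\<in>V. 2 * d p * (\<Sum>u\<in>V. d u * g p u))"
      by (intro sum.cong refl) (simp add: HS')
    also have "\<dots> = 2 * Q" unfolding Qswap by (simp add: sum_distrib_left mult_ac)
    finally show ?thesis .
  qed
  have B4: "(\<Sum>e\<in>E. \<Sum>f\<in>E. F (Inr e) (Inr f)) = 2 * Q + 2 * m"
  proof -
    have "(\<Sum>e\<in>E. \<Sum>f\<in>E. F (Inr e) (Inr f)) = (\<Sum>e\<in>E. \<Sum>f\<in>E. 2 * (\<Sum>c\<in>f. \<Sum>u\<in>e. g c u) + (if e = f then 2 else 0))"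
      using dSr by (intro sum.cong refl) (simp add: F_def gSrr algebra_simps)
    also have "\<dots> = (\<Sum>e\<in>E. 2 * (\<Sum>f\<in>E. \<Sum>c\<in>f. \<Sum>u\<in>e. g c u) + 2)"
      using fE by (intro sum.cong refl) (simp add: sum.distrib sum_distrib_left)
    also have "\<dots> = (\<Sum>e\<in>E. 2 * (\<Sum>c\<in>V. d c * (\<Sum>u\<in>e. g c u)) + 2)"
      by (intro sum.cong refl) (simp add: HS')
    also have "\<dots> = 2 * (\<Sum>e\<in>E. \<Sum>c\<in>V. d c * (\<Sum>u\<in>e. g c u)) + 2 * m"
      by (simp add: sum.distrib sum_distrib_left m_def)
    also have "(\<Sum>e\<in>E. \<Sum>c\<in>V. d c * (\<Sum>u\<in>e. g c u)) = (\<Sum>c\<in>V. d c * (\<Sum>e\<in>E. \<Sum>u\<in>e. g c u))"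
      by (subst sum.swap) (simp add: sum_distrib_left)
    also have "2 * (\<Sum>c\<in>V. d c * (\<Sum>e\<in>E. \<Sum>u\<in>e. g c u)) + 2 * m = 2 * (\<Sum>c\<in>V. d c * (\<Sum>u\<in>V. d u * g c u)) + 2 * m"
      by (simp add: HS')
    also have "\<dots> = 2 * Q + 2 * m" unfolding Qswap
      by (simp add: sum_distrib_left mult_ac)
    finally show ?thesis .
  qed
  have QS: "(\<Sum>i\<in>VS. \<Sum>j\<in>VS. dS i * dS j * gS j i) = 8 * Q + 2 * m"
    unfolding QS0 sum.distrib B1 B2 B3 B4 by simp
  have "mult_deg_kirchhoff VS ES = 4 * m * (3 * P + A + m) - (8 * Q + 2 * m)"
    using rS DS PS QS by simp
  moreover have "mult_deg_kirchhoff V E = 2 * m * P - Q" using rG hs by simp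
  moreover have "A = P - n + 1" using PmA by simp
  ultimately have "mult_deg_kirchhoff VS ES = 8 * mult_deg_kirchhoff V E + 2 * m * (2 * m - 2 * n + 1)"
    by (simp add: algebra_simps)
  then show ?thesis unfolding VS_def ES_def m_def n_def .
qed

end
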